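(* Fix $M$, integers $L,l$, and a job set $J$ with $L\ge D(J)$, and let $h$ be a hash function that is $(L,l)$-good for $J$. Then, for any starting positions of the jobs and any choices of which eligible job to work on, the algorithm StatelessWeakScheduler run on $J$ with parameters $L,l,h$ completes at least half of the jobs within $2Ll$ time steps.
   Context: Job-shop scheduling with unit jobs: machines $M$; jobs $J$ with sequences $\mathrm{seq}(j)\in M^*$, unique identifiers $\mathrm{ind}(j)\in I=\{1,\dots,|M|^c\}$ and positions $\mathrm{pos}(j)_t\in\{0,\dots,\mathrm{len}(\mathrm{seq}(j))\}$ (completed at the last value; here initial positions are arbitrary); $\mathrm{que}(m)_t=\{j:\mathrm{seq}(j)_{\mathrm{pos}(j)_t}=m\}$; each step each machine works on at most one job in its queue, which advances one position. $D(J)=\max_j\mathrm{len}(\mathrm{seq}(j))$. For $h:M^*\times I\to\{0,\dots,L-1\}$ with $h(j):=h(\mathrm{seq}(j),\mathrm{ind}(j))$: $\mathrm{virt}(j,i)=h(j)+i$ for $i<\mathrm{len}(\mathrm{seq}(j))$ and $\infty$ otherwise; $\mathrm{virt}(j)_t=\mathrm{virt}(j,\mathrm{pos}(j)_t)$. StatelessWeakScheduler$(m,L,l,h,t)$ at time $t$ (counted from the subroutine's start): $T=\lfloor t/l\rfloor$, $Q=\{j\in\mathrm{que}(m)_t:\mathrm{virt}(j)_t=T\}$; if $0<|Q|\le l$ machine $m$ works on an arbitrary $j\in Q$, else does nothing. Bad pattern (for fixed $M,L,l,J$): sets $B_{T,m}$, $0\le T<2L$, $m\in M$, of (job, position) pairs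 with $\mathrm{seq}(j)_i=m$ for $(j,i)\in B_{T,m}$; each $j\in J$ appears at most once in $\bigsqcup B_{T,m}$; $|B_{T,m}|\in\{0\}\cup(l,|J|]$; $\sum|B_{T,m}|>|J|/2$. It occurs for $h$ if $\mathrm{virt}(j,i)=T$ for all $(j,i)\in B_{T,m}$ and all $(T,m)$. $h$ is $(L,l)$-good for $J$ if no bad pattern occurs for $h$. *)

theory Defs
  imports Main "HOL-Library.Extended_Nat"
begin

text \<open>Jobs are elements of an abstract type 'j, with sequence seq j (a list of machines,
  indexed from 0) and identifier ind j.  A hash function h maps (sequence, identifier) to
  a number; h(j) := h (seq j) (ind j).\<close>

definition D :: "'j set \<Rightarrow> ('j \<Rightarrow> 'm list) \<Rightarrow> nat" where
  "D J seq = Max (insert 0 ((\<lambda>j. length (seq j)) ` J))"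

definition virt :: "('j \<Rightarrow> 'm list) \<Rightarrow> ('j \<Rightarrow> nat) \<Rightarrow> ('m list \<Rightarrow> nat \<Rightarrow> nat)
    \<Rightarrow> 'j \<Rightarrow> nat \<Rightarrow> enat" where
  "virt seq ind h j i = (if i < length (seq j) then enat (h (seq j) (ind j) + i) else \<infinity>)"

text \<open>que(m) for a position assignment p (a completed job, p j = length (seq j), is in no queue).\<close>
definition que :: "'j set \<Rightarrow> ('j \<Rightarrow> 'm list) \<Rightarrow> ('j \<Rightarrow> nat) \<Rightarrow> 'm \<Rightarrow> 'j set" where
  "que J seq p m = {j \<in> J. p j < length (seq j) \<and> seq j ! p j = m}"

definition swsQ :: "'j set \<Rightarrow> ('j \<Rightarrow> 'm list) \<Rightarrow> ('j \<Rightarrow> nat) \<Rightarrow> ('m list \<Rightarrow> nat \<Rightarrow> nat)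
    \<Rightarrow> nat \<Rightarrow> ('j \<Rightarrow> nat) \<Rightarrow> nat \<Rightarrow> 'm \<Rightarrow> 'j set" where
  "swsQ J seq ind h l p t m = {j \<in> que J seq p m. virt seq ind h j (p j) = enat (t div l)}"

text \<open>A run of StatelessWeakScheduler: pos t j is the position of job j at time t,
  sel t m is the (arbitrary) job that machine m chooses at time t from Q (relevant only
  when 0 < |Q| \<le> l).\<close>
definition sws_run :: "'m set \<Rightarrow> 'j set \<Rightarrow> ('j \<Rightarrow> 'm list) \<Rightarrow> ('j \<Rightarrow> nat)
    \<Rightarrow> ('m list \<Rightarrow> nat \<Rightarrow> nat) \<Rightarrow> nat \<Rightarrow> (nat \<Rightarrow> 'j \<Rightarrow> nat) \<Rightarrow> (nat \<Rightarrow> 'm \<Rightarrow> 'j) \<Rightarrow> bool" where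
  "sws_run M J seq ind h l pos sel \<longleftrightarrow>
     (\<forall>j\<in>J. pos 0 j \<le> length (seq j)) \<and>
     (\<forall>t. \<forall>m\<in>M. 0 < card (swsQ J seq ind h l (pos t) t m) \<and> card (swsQ J seq ind h l (pos t) t m) \<le> l
         \<longrightarrow> sel t m \<in> swsQ J seq ind h l (pos t) t m) \<and>
     (\<forall>t. \<forall>j\<in>J. pos (Suc t) j =
         (if pos t j < length (seq j) \<and>
             0 < card (swsQ J seq ind h l (pos t) t (seq j ! pos t j)) \<and>
             card (swsQ J seq ind h l (pos t) t (seq j ! pos t j)) \<le> l \<and>
             sel t (seq j ! pos t j) = j
          then Suc (pos t j) else pos t j))"

definition bad_pattern :: "'m set \<Rightarrow> nat \<Rightarrow> nat \<Rightarrow> 'j set \<Rightarrow> ('j \<Rightarrow> 'm list)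
    \<Rightarrow> (nat \<Rightarrow> 'm \<Rightarrow> ('j \<times> nat) set) \<Rightarrow> bool" where
  "bad_pattern M L l J seq B \<longleftrightarrow>
     (\<forall>T<2*L. \<forall>m\<in>M. \<forall>(j,i)\<in>B T m. j \<in> J \<and> i < length (seq j) \<and> seq j ! i = m) \<and>
     (\<forall>T<2*L. \<forall>m\<in>M. \<forall>T'<2*L. \<forall>m'\<in>M. \<forall>j i i'.
         (j,i) \<in> B T m \<longrightarrow> (j,i') \<in> B T' m' \<longrightarrow> T = T' \<and> m = m' \<and> i = i') \<and>
     (\<forall>T<2*L. \<forall>m\<in>M. card (B T m) = 0 \<or> (l < card (B T m) \<and> card (B T m) \<le> card J)) \<and>
     2 * (\<Sum>T<2*L. \<Sum>m\<in>M. card (B T m)) > card J"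

definition pattern_occurs :: "'m set \<Rightarrow> nat \<Rightarrow> ('j \<Rightarrow> 'm list) \<Rightarrow> ('j \<Rightarrow> nat)
    \<Rightarrow> ('m list \<Rightarrow> nat \<Rightarrow> nat) \<Rightarrow> (nat \<Rightarrow> 'm \<Rightarrow> ('j \<times> nat) set) \<Rightarrow> bool" where
  "pattern_occurs M L seq ind h B \<longleftrightarrow>
     (\<forall>T<2*L. \<forall>m\<in>M. \<forall>(j,i)\<in>B T m. virt seq ind h j i = enat T)"

definition good_hash :: "'m set \<Rightarrow> nat \<Rightarrow> nat \<Rightarrow> 'j set \<Rightarrow> ('j \<Rightarrow> 'm list) \<Rightarrow> ('j \<Rightarrow> nat)
    \<Rightarrow> ('m list \<Rightarrow> nat \<Rightarrow> nat) \<Rightarrow> bool" where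
  "good_hash M L l J seq ind h \<longleftrightarrow>
     \<not> (\<exists>B. bad_pattern M L l J seq B \<and> pattern_occurs M L seq ind h B)"

end

theory Submission
  imports Defs
begin


lemma memQ:
  "j' \<in> swsQ J seq ind h l p t m \<longleftrightarrow>
     j' \<in> J \<and> p j' < length (seq j') \<and> seq j' ! p j' = m \<and> h (seq j') (ind j') + p j' = t div l"
  by (auto simp: swsQ_def que_def virt_def)

context
  fixes M :: "'m set" and J :: "'j set" and seq :: "'j \<Rightarrow> 'm list" and ind :: "'j \<Rightarrow> nat"
    and h :: "'m list \<Rightarrow> nat \<Rightarrow> nat" and l :: nat
    and pos :: "nat \<Rightarrow> 'j \<Rightarrow> nat" and sel :: "nat \<Rightarrow> 'm \<Rightarrow> 'j"
  assumes run: "sws_run M J seq ind h l pos sel"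
    and seqM: "\<forall>j\<in>J. set (seq j) \<subseteq> M"
begin

lemma stepeq: "j \<in> J \<Longrightarrow> pos (Suc t) j =
         (if pos t j < length (seq j) \<and>
             0 < card (swsQ J seq ind h l (pos t) t (seq j ! pos t j)) \<and>
             card (swsQ J seq ind h l (pos t) t (seq j ! pos t j)) \<le> l \<and>
             sel t (seq j ! pos t j) = j
          then Suc (pos t j) else pos t j)"
  using run unfolding sws_run_def by blast

lemma selQ: "m \<in> M \<Longrightarrow> 0 < card (swsQ J seq ind h l (pos t) t m) \<Longrightarrow>
   card (swsQ J seq ind h l (pos t) t m) \<le> l \<Longrightarrow> sel t m \<in> swsQ J seq ind h l (pos t) t m"
  using run unfolding sws_run_def by blast

lemma moved:
  assumes "j \<in> J" "pos (Suc t) j \<noteq> pos t j"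
  shows "pos (Suc t) j = Suc (pos t j) \<and> pos t j < length (seq j)
     \<and> h (seq j) (ind j) + pos t j = t div l"
proof -
  let ?m = "seq j ! pos t j"
  have c: "pos t j < length (seq j) \<and>
             0 < card (swsQ J seq ind h l (pos t) t ?m) \<and>
             card (swsQ J seq ind h l (pos t) t ?m) \<le> l \<and> sel t ?m = j"
    using stepeq[OF assms(1), of t] assms(2) by (auto split: if_splits)
  then have "?m \<in> M" using seqM assms(1) nth_mem by blast
  then have "sel t ?m \<in> swsQ J seq ind h l (pos t) t ?m" using c selQ by blast
  then show ?thesis using c stepeq[OF assms(1), of t] by (auto simp: memQ)
qed

lemma mono_pos: "j \<in> J \<Longrightarrow> pos t j \<le> pos (t + k) j"
proof (induction k)
  case 0 then show ?case by simp
next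
  case (Suc k)
  then show ?case using moved[OF Suc.prems, of "t+k"] by (cases "pos (Suc (t+k)) j = pos (t+k) j") auto
qed

lemma stay:
  assumes "j \<in> J" "h (seq j) (ind j) + pos t j < t div l"
  shows "pos (t + k) j = pos t j"
proof (induction k)
  case 0 then show ?case by simp
next
  case (Suc k)
  have "t div l \<le> (t + k) div l" by (simp add: div_le_mono)
  then show ?case using moved[OF assms(1), of "t+k"] Suc assms(2)
    by (cases "pos (Suc (t+k)) j = pos (t+k) j") auto
qed

lemma stepS:
  assumes "Suc t div l = t div l" "m \<in> M" "0 < card (swsQ J seq ind h l (pos t) t m)"
    "card (swsQ J seq ind h l (pos t) t m) \<le> l"
  shows "sel t m \<in> swsQ J seq ind h l (pos t) t m \<and>
    swsQ J seq ind h l (pos (Suc t)) (Suc t) m \<subseteq> swsQ J seq ind h l (pos t) t m - {sel t m}"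
proof
  show s: "sel t m \<in> swsQ J seq ind h l (pos t) t m" using selQ assms by blast
  show "swsQ J seq ind h l (pos (Suc t)) (Suc t) m \<subseteq> swsQ J seq ind h l (pos t) t m - {sel t m}"
  proof
    fix j' assume j': "j' \<in> swsQ J seq ind h l (pos (Suc t)) (Suc t) m"
    then have jJ: "j' \<in> J" by (simp add: memQ)
    show "j' \<in> swsQ J seq ind h l (pos t) t m - {sel t m}"
    proof (cases "pos (Suc t) j' = pos t j'")
      case True
      then have inq: "j' \<in> swsQ J seq ind h l (pos t) t m" using j' assms(1) by (simp add: memQ)
      moreover have "j' \<noteq> sel t m"
      proof
        assume e: "j' = sel t m"
        have "pos (Suc t) j' = Suc (pos t j')"
          using stepeq[OF jJ, of t] inq assms(3,4) e by (simp add: memQ)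
        then show False using True by simp
      qed
      ultimately show ?thesis by simp
    next
      case False
      then show ?thesis using moved[OF jJ False] j' assms(1) by (simp add: memQ)
    qed
  qed
qed


lemma bound_pos: "j \<in> J \<Longrightarrow> pos t j \<le> length (seq j)"
proof (induction t)
  case 0 then show ?case using run unfolding sws_run_def by blast
next
  case (Suc t)
  then show ?case using moved[OF Suc.prems, of t] by (cases "pos (Suc t) j = pos t j") auto
qed

lemma main:
  assumes finJ: "finite J" and l0: "0 < l" and jJ: "j \<in> J" and jinc: "pos N j < length (seq j)"
    and NT: "N = 2 * L * l"
    and Tdef: "T = h (seq j) (ind j) + pos N j" and TL: "T < 2 * L" and mdef: "m = seq j ! pos N j"
  shows "l < card {j' \<in> J. pos N j' < length (seq j') \<and> h (seq j') (ind j') + pos N j' = T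
                   \<and> seq j' ! pos N j' = m}"
proof -
  define t0 where "t0 = T * l"
  define Q0 where "Q0 = swsQ J seq ind h l (pos t0) t0 m"
  have t0l: "t0 + l \<le> N" using TL l0 unfolding t0_def NT
    by (metis Suc_leI add.commute mult.commute mult_Suc_right mult_le_mono2)
  have divk: "(t0 + k) div l = T" if "k < l" for k
    using that l0 unfolding t0_def by (simp add: div_add1_eq)
  have le0: "pos t0 j \<le> pos N j" using mono_pos[OF jJ, of t0 "N - t0"] t0l by simp
  have p0: "pos t0 j = pos N j"
  proof (rule ccontr)
    assume "pos t0 j \<noteq> pos N j"
    then have "h (seq j) (ind j) + pos t0 j < t0 div l" using le0 l0 Tdef unfolding t0_def by simp
    from stay[OF jJ this, of "N - t0"] show False using t0l \<open>pos t0 j \<noteq> pos N j\<close> by simp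
  qed
  have mM: "m \<in> M" using seqM jJ jinc mdef nth_mem by blast
  have unm: "pos (t0 + k) j = pos t0 j" if "k \<le> N - t0" for k
  proof -
    have "pos t0 j \<le> pos (t0 + k) j" by (rule mono_pos[OF jJ])
    moreover have "pos (t0 + k) j \<le> pos (t0 + k + (N - t0 - k)) j" by (rule mono_pos[OF jJ])
    ultimately show ?thesis using that p0 t0l by simp
  qed
  have jQk: "j \<in> swsQ J seq ind h l (pos (t0 + k)) (t0 + k) m" if "k < l" for k
    using unm[of k] that t0l divk[OF that] jJ jinc p0 Tdef mdef by (simp add: memQ)
  have finQ: "finite (swsQ J seq ind h l p t m')" for p t m'
    using finJ by (rule rev_finite_subset) (auto simp: memQ)
  have cQ: "l < card Q0"
  proof (rule ccontr)
    assume "\<not> l < card Q0"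
    then have cQ: "card Q0 \<le> l" by simp
    have inv: "k < l \<longrightarrow> swsQ J seq ind h l (pos (t0 + k)) (t0 + k) m \<subseteq> Q0
          \<and> card (swsQ J seq ind h l (pos (t0 + k)) (t0 + k) m) + k \<le> card Q0" for k
    proof (induction k)
      case 0 then show ?case by (simp add: Q0_def)
    next
      case (Suc k)
      show ?case
      proof
        assume sk: "Suc k < l"
        let ?Q = "swsQ J seq ind h l (pos (t0 + k)) (t0 + k) m"
        have IH: "?Q \<subseteq> Q0 \<and> card ?Q + k \<le> card Q0" using Suc.IH sk by simp
        have "j \<in> ?Q" using jQk sk by simp
        then have c1: "0 < card ?Q" using finQ card_gt_0_iff by blast
        have c2: "card ?Q \<le> l" using IH cQ by simp
        have d: "Suc (t0 + k) div l = (t0 + k) div l" using divk[of k] divk[of "Suc k"] sk by simp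
        from stepS[OF d mM c1 c2]
        have S: "sel (t0 + k) m \<in> ?Q \<and>
           swsQ J seq ind h l (pos (Suc (t0 + k))) (Suc (t0 + k)) m \<subseteq> ?Q - {sel (t0 + k) m}" .
        then have "card (swsQ J seq ind h l (pos (Suc (t0 + k))) (Suc (t0 + k)) m) \<le> card (?Q - {sel (t0 + k) m})"
          using finQ by (meson card_mono finite_Diff)
        also have "\<dots> = card ?Q - 1" using S finQ by simp
        finally show "swsQ J seq ind h l (pos (t0 + Suc k)) (t0 + Suc k) m \<subseteq> Q0 \<and>
          card (swsQ J seq ind h l (pos (t0 + Suc k)) (t0 + Suc k) m) + Suc k \<le> card Q0"
          using S IH c1 by auto
      qed
    qed
    define k where "k = l - 1"
    have kl: "k < l" "Suc k = l" using l0 k_def by auto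
    let ?Q = "swsQ J seq ind h l (pos (t0 + k)) (t0 + k) m"
    have "card ?Q + k \<le> card Q0" using inv kl by blast
    then have c1: "card ?Q \<le> 1" using cQ kl by simp
    have jq: "j \<in> ?Q" using jQk kl by simp
    then have "0 < card ?Q" using finQ card_gt_0_iff by blast
    then have cq: "card ?Q = 1" using c1 by simp
    then have "?Q = {j}" using jq by (metis card_1_singletonE singletonD)
    moreover have "sel (t0 + k) m \<in> ?Q" using selQ[OF mM] cq l0 by simp
    ultimately have sj: "sel (t0 + k) m = j" by simp
    have "pos (Suc (t0 + k)) j = Suc (pos (t0 + k) j)"
      using stepeq[OF jJ, of "t0 + k"] jq cq l0 sj by (simp add: memQ)
    moreover have "pos (t0 + Suc k) j = pos t0 j" using unm[of "Suc k"] kl t0l by simp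
    moreover have "pos (t0 + k) j = pos t0 j" using unm[of k] kl t0l by simp
    ultimately show False by simp
  qed
  have st: "k \<le> l \<longrightarrow> (\<forall>j'\<in>Q0. pos (t0 + k) j' = pos t0 j')" for k
  proof (induction k)
    case 0 then show ?case by simp
  next
    case (Suc k)
    show ?case
    proof (intro impI ballI)
      fix j' assume sk: "Suc k \<le> l" and j'Q: "j' \<in> Q0"
      let ?Q = "swsQ J seq ind h l (pos (t0 + k)) (t0 + k) m"
      have IH: "\<forall>j'\<in>Q0. pos (t0 + k) j' = pos t0 j'" using Suc.IH sk by simp
      have sub: "Q0 \<subseteq> ?Q"
      proof
        fix x assume "x \<in> Q0"
        then show "x \<in> ?Q" using IH divk[of k] sk unfolding Q0_def
          by (simp add: memQ t0_def l0)
      qed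
      then have "card Q0 \<le> card ?Q" using finQ card_mono by blast
      then have big: "l < card ?Q" using cQ by simp
      have j'J: "j' \<in> J" and mj: "seq j' ! pos (t0 + k) j' = m"
        using j'Q IH unfolding Q0_def by (auto simp: memQ)
      have "pos (Suc (t0 + k)) j' = pos (t0 + k) j'"
        using stepeq[OF j'J, of "t0 + k"] big mj by simp
      then show "pos (t0 + Suc k) j' = pos t0 j'" using IH j'Q by simp
    qed
  qed
  have fin: "\<forall>j'\<in>Q0. pos N j' = pos t0 j'"
  proof
    fix j' assume j'Q: "j' \<in> Q0"
    have e: "pos (t0 + l) j' = pos t0 j'" using st[of l] j'Q by simp
    have j'J: "j' \<in> J" and hv: "h (seq j') (ind j') + pos t0 j' = T"
      using j'Q l0 unfolding Q0_def t0_def by (auto simp: memQ)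
    have "(t0 + l) div l = Suc T" using l0 unfolding t0_def
      by (metis add.commute div_mult_self3 div_self less_not_refl2 plus_1_eq_Suc)
    then have "h (seq j') (ind j') + pos (t0 + l) j' < (t0 + l) div l" using e hv by simp
    from stay[OF j'J this, of "N - t0 - l"] show "pos N j' = pos t0 j'" using e t0l by simp
  qed
  have "Q0 \<subseteq> {j' \<in> J. pos N j' < length (seq j') \<and> h (seq j') (ind j') + pos N j' = T
                   \<and> seq j' ! pos N j' = m}"
    using fin l0 unfolding Q0_def t0_def by (auto simp: memQ)
  then have "card Q0 \<le> card {j' \<in> J. pos N j' < length (seq j') \<and> h (seq j') (ind j') + pos N j' = T
                   \<and> seq j' ! pos N j' = m}"
    using finJ by (intro card_mono) auto
  then show ?thesis using cQ by simp
qed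

end



theorem lemma5p14:
  fixes M :: "'m set" and J :: "'j set" and seq :: "'j \<Rightarrow> 'm list" and ind :: "'j \<Rightarrow> nat"
    and c :: nat and L l :: nat and h :: "'m list \<Rightarrow> nat \<Rightarrow> nat"
    and pos :: "nat \<Rightarrow> 'j \<Rightarrow> nat" and sel :: "nat \<Rightarrow> 'm \<Rightarrow> 'j"
  assumes "finite M" and "finite J"
    and "\<forall>j\<in>J. set (seq j) \<subseteq> M"
    and "\<forall>j\<in>J. ind j \<in> {1..card M ^ c}" and "inj_on ind J"
    and "\<forall>s i. set s \<subseteq> M \<longrightarrow> i \<in> {1..card M ^ c} \<longrightarrow> h s i < L"
    and "L \<ge> D J seq"
    and "good_hash M L l J seq ind h"
    and "sws_run M J seq ind h l pos sel"
  shows "2 * card {j \<in> J. pos (2 * L * l) j = length (seq j)} \<ge> card J"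
proof (rule ccontr)
  assume neg: "\<not> ?thesis"
  note finM = assms(1) and finJ = assms(2) and seqM = assms(3) and run = assms(9)
  define N where "N = 2 * L * l"
  define f where "f j = h (seq j) (ind j) + pos N j" for j
  define g where "g j = seq j ! pos N j" for j
  define I where "I = {j \<in> J. pos N j < length (seq j)}"
  define C where "C = {j \<in> J. pos N j = length (seq j)}"
  define F where "F T m = {j \<in> I. f j = T \<and> g j = m}" for T m
  define B where "B T m = (\<lambda>j. (j, pos N j)) ` F T m" for T m
  have bnd: "pos N j \<le> length (seq j)" if "j \<in> J" for j
    using bound_pos[OF run seqM that] .
  have JCI: "J = C \<union> I" "C \<inter> I = {}" using bnd unfolding C_def I_def by (auto simp: le_less)
  have finI: "finite I" "finite C" using finJ unfolding I_def C_def by auto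
  have cJ: "card J = card C + card I" using JCI finI card_Un_disjoint by metis
  have neg2: "2 * card C < card J" using neg unfolding C_def N_def by simp
  have DL: "length (seq j) \<le> L" if "j \<in> J" for j
  proof -
    have "length (seq j) \<le> D J seq" unfolding D_def using finJ that by (intro Max_ge) auto
    then show ?thesis using assms(7) by simp
  qed
  have fL: "f j < 2 * L" if "j \<in> I" for j
  proof -
    have jJ: "j \<in> J" using that I_def by simp
    have "h (seq j) (ind j) < L" using assms(6) seqM assms(4) jJ by blast
    moreover have "pos N j < L" using DL[OF jJ] that I_def by simp
    ultimately show ?thesis unfolding f_def by simp
  qed
  have gM: "g j \<in> M" if "j \<in> I" for j
    using that seqM unfolding I_def g_def by (auto intro: nth_mem)
  have finF: "finite (F T m)" for T m using finI unfolding F_def by simp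
  have cB: "card (B T m) = card (F T m)" for T m
    unfolding B_def by (rule card_image) (auto simp: inj_on_def)
  have sum1: "(\<Sum>m\<in>M. card (F T m)) = card {j \<in> I. f j = T}" for T
  proof -
    have "card (\<Union>m\<in>M. F T m) = (\<Sum>m\<in>M. card (F T m))"
      using finM finF by (intro card_UN_disjoint) (auto simp: F_def)
    moreover have "(\<Union>m\<in>M. F T m) = {j \<in> I. f j = T}" using gM unfolding F_def by auto
    ultimately show ?thesis by simp
  qed
  have sum2: "(\<Sum>T<2*L. card {j \<in> I. f j = T}) = card I"
  proof -
    have "card (\<Union>T\<in>{..<2*L}. {j \<in> I. f j = T}) = (\<Sum>T<2*L. card {j \<in> I. f j = T})"
      using finI by (intro card_UN_disjoint) auto
    moreover have "(\<Union>T\<in>{..<2*L}. {j \<in> I. f j = T}) = I" using fL by auto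
    ultimately show ?thesis by simp
  qed
  have sumB: "(\<Sum>T<2*L. \<Sum>m\<in>M. card (B T m)) = card I"
    using sum1 sum2 cB by simp
  have cardcond: "card (B T m) = 0 \<or> (l < card (B T m) \<and> card (B T m) \<le> card J)" for T m
  proof (cases "F T m = {}")
    case True then show ?thesis using cB by simp
  next
    case False
    then obtain j where j: "j \<in> F T m" by blast
    have le: "card (B T m) \<le> card J" unfolding cB F_def I_def using finJ by (intro card_mono) auto
    have "l < card (F T m)"
    proof (cases "l = 0")
      case True then show ?thesis using False finF card_gt_0_iff by blast
    next
      case False
      have jI: "j \<in> I" and jT: "f j = T" and jm: "g j = m" using j F_def by auto
      have "l < card {j' \<in> J. pos N j' < length (seq j') \<and> h (seq j') (ind j') + pos N j' = T
                   \<and> seq j' ! pos N j' = m}"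
        using main[OF run seqM finJ _ _ _ N_def, of j T m] False jI jT jm fL[OF jI]
        unfolding I_def f_def g_def by simp
      moreover have "{j' \<in> J. pos N j' < length (seq j') \<and> h (seq j') (ind j') + pos N j' = T
                   \<and> seq j' ! pos N j' = m} = F T m"
        unfolding F_def I_def f_def g_def by auto
      ultimately show ?thesis by simp
    qed
    then show ?thesis using le cB by simp
  qed
  have bp: "bad_pattern M L l J seq B"
    unfolding bad_pattern_def
  proof (intro conjI)
    show "\<forall>T<2 * L. \<forall>m\<in>M. \<forall>(j, i)\<in>B T m. j \<in> J \<and> i < length (seq j) \<and> seq j ! i = m"
      unfolding B_def F_def I_def g_def by auto
    show "\<forall>T<2 * L. \<forall>m\<in>M. \<forall>T'<2 * L. \<forall>m'\<in>M. \<forall>j i i'.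
         (j, i) \<in> B T m \<longrightarrow> (j, i') \<in> B T' m' \<longrightarrow> T = T' \<and> m = m' \<and> i = i'"
      unfolding B_def F_def by auto
    show "\<forall>T<2 * L. \<forall>m\<in>M. card (B T m) = 0 \<or> l < card (B T m) \<and> card (B T m) \<le> card J"
      using cardcond by blast
    show "card J < 2 * (\<Sum>T<2 * L. \<Sum>m\<in>M. card (B T m))"
      using sumB cJ neg2 by simp
  qed
  have po: "pattern_occurs M L seq ind h B"
    unfolding pattern_occurs_def B_def F_def I_def f_def by (auto simp: virt_def)
  show False using assms(8) bp po unfolding good_hash_def by blast
qed

end
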